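(* Let $m\ge 2$, let $n_1,\dots,n_m\ge 4$ be even, and let $\mathcal{C}=\mathcal{C}(C_{n_1},\dots,C_{n_m})$ be the even chain cycle. Let $V_1=\{v^2_1,\dots,v^m_1\}$ and $V_2=V(\mathcal{C})\setminus V_1$ (so each vertex of $V_2$ has a unique name $v^i_j$ and lies in exactly one cycle $C_{n_i}$). Let $v^i_j,v^k_l\in V_2$ be distinct. (a) If $i=k$, then $v^i_j$ and $v^i_l$ are mutually maximally distant in $\mathcal{C}$ if and only if $d(v^i_j,v^i_l)=n_i/2$ (the diameter of $C_{n_i}$). (b) If $i\neq k$, then $v^i_j$ and $v^k_l$ are mutually maximally distant in $\mathcal{C}$ if and only if $d(v^i_j,v^k_l)$ equals the diameter of $\mathcal{C}$.
   Context: Let $C_{n_1},\dots,C_{n_m}$ be pairwise disjoint cycles, $V(C_{n_i})=\{v^i_1,\dots,v^i_{n_i}\}$ with $v^i_j$ adjacent to $v^i_{j+1}$ (indices mod $n_i$). The even chain cycle $\mathcal{C}(C_{n_1},\dots,C_{n_m})$ (all $n_i$ even) is obtained by identifying $v^i_{n_i/2+1}$ with $v^{i+1}_1$ for each $i=1,\dots,m-1$; the identified vertex carries both names. A vertex $u$ is maximally distant from $v$ if every neighbor $w$ of $u$ satisfies $d(v,w)\le d(u,v)$; $u,v$ are mutually maximally distant if each is maximally distant from the other. *)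

theory Defs
  imports Main
begin

definition edge_rel :: "('a \<Rightarrow> 'a \<Rightarrow> bool) \<Rightarrow> ('a \<times> 'a) set" where
  "edge_rel E = {(u, v). E u v}"

definition gdist :: "('a \<Rightarrow> 'a \<Rightarrow> bool) \<Rightarrow> 'a \<Rightarrow> 'a \<Rightarrow> nat" where
  "gdist E u v = (LEAST k. (u, v) \<in> (edge_rel E) ^^ k)"

definition max_distant :: "('a \<Rightarrow> 'a \<Rightarrow> bool) \<Rightarrow> 'a \<Rightarrow> 'a \<Rightarrow> bool" where
  "max_distant E u v = (\<forall>w. E u w \<longrightarrow> gdist E v w \<le> gdist E u v)"

definition mutually_max_distant :: "('a \<Rightarrow> 'a \<Rightarrow> bool) \<Rightarrow> 'a \<Rightarrow> 'a \<Rightarrow> bool" where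
  "mutually_max_distant E u v = (max_distant E u v \<and> max_distant E v u)"

definition gdiam :: "'a set \<Rightarrow> ('a \<Rightarrow> 'a \<Rightarrow> bool) \<Rightarrow> nat" where
  "gdiam V E = Max {gdist E u v | u v. u \<in> V \<and> v \<in> V}"

text \<open>Cycles are indexed by i \<in> {1..m} with lengths n i; the vertex named v^i_j
  (1 \<le> j \<le> n i) is represented by the pair (i,j), except that v^{i+1}_1 is
  identified with v^i_{n_i/2+1}, represented by the pair (i, n i div 2 + 1).\<close>

definition ecc_vx :: "(nat \<Rightarrow> nat) \<Rightarrow> nat \<Rightarrow> nat \<Rightarrow> nat \<times> nat" where
  "ecc_vx n i j = (if 2 \<le> i \<and> j = 1 then (i - 1, n (i - 1) div 2 + 1) else (i, j))"

definition ecc_V :: "(nat \<Rightarrow> nat) \<Rightarrow> nat \<Rightarrow> (nat \<times> nat) set" where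
  "ecc_V n m = {ecc_vx n i j | i j. 1 \<le> i \<and> i \<le> m \<and> 1 \<le> j \<and> j \<le> n i}"

definition ecc_adj :: "(nat \<Rightarrow> nat) \<Rightarrow> nat \<Rightarrow> nat \<times> nat \<Rightarrow> nat \<times> nat \<Rightarrow> bool" where
  "ecc_adj n m u v = (\<exists>i j. 1 \<le> i \<and> i \<le> m \<and> 1 \<le> j \<and> j \<le> n i \<and>
      ((u = ecc_vx n i j \<and> v = ecc_vx n i (j mod n i + 1)) \<or>
       (v = ecc_vx n i j \<and> u = ecc_vx n i (j mod n i + 1))))"

definition ecc_V1 :: "(nat \<Rightarrow> nat) \<Rightarrow> nat \<Rightarrow> (nat \<times> nat) set" where
  "ecc_V1 n m = {ecc_vx n i 1 | i. 2 \<le> i \<and> i \<le> m}"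

end

theory Submission
  imports Defs
begin


definition cd :: "nat \<Rightarrow> nat \<Rightarrow> nat \<Rightarrow> nat" where
 "cd N j t = min (if j \<le> t then t - j else j - t) (N - (if j \<le> t then t - j else j - t))"
definition sc :: "nat \<Rightarrow> nat \<Rightarrow> nat" where "sc N j = (if j = N then 1 else j + 1)"
definition pr :: "nat \<Rightarrow> nat \<Rightarrow> nat" where "pr N j = (if j = 1 then N else j - 1)"

lemma cd_sym: "cd N j t = cd N t j" unfolding cd_def by (auto simp: min_def split: if_splits)
lemma cd_zero: "1 \<le> j \<Longrightarrow> j \<le> N \<Longrightarrow> 1 \<le> t \<Longrightarrow> t \<le> N \<Longrightarrow> cd N j t = 0 \<longleftrightarrow> j = t"
  unfolding cd_def by (auto simp: min_def split: if_splits)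
lemma cd_refl: "cd N j j = 0" unfolding cd_def by simp
lemma cd_le: "cd N j t \<le> N div 2" unfolding cd_def by (auto simp: min_def split: if_splits)
lemma cd_lip: "1 \<le> j \<Longrightarrow> j \<le> N \<Longrightarrow> 1 \<le> t \<Longrightarrow> t \<le> N \<Longrightarrow>
   cd N (sc N j) t \<le> cd N j t + 1 \<and> cd N j t \<le> cd N (sc N j) t + 1"
  unfolding cd_def sc_def by (auto simp: min_def split: if_splits)
lemma cd_lt: "j \<le> t \<Longrightarrow> 2*(t-j) \<le> N \<Longrightarrow> cd N j t = t - j"
  unfolding cd_def min_def by auto
lemma cd_lt2: "j \<le> t \<Longrightarrow> N \<le> 2*(t-j) \<Longrightarrow> cd N j t = N - (t - j)"
  unfolding cd_def min_def by auto
lemma cd_gt: "t \<le> j \<Longrightarrow> 2*(j-t) \<le> N \<Longrightarrow> cd N j t = j - t"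
  unfolding cd_def min_def by auto
lemma cd_gt2: "t \<le> j \<Longrightarrow> N \<le> 2*(j-t) \<Longrightarrow> cd N j t = N - (j - t)"
  unfolding cd_def min_def by auto

lemma cd_desc: assumes "1 \<le> j" "j \<le> N" "1 \<le> t" "t \<le> N" "j \<noteq> t"
  shows "cd N (sc N j) t < cd N j t \<or> cd N (pr N j) t < cd N j t"
proof (cases "j < t")
  case jt: True
  then have s: "sc N j = j+1" unfolding sc_def using assms by auto
  show ?thesis
  proof (cases "2*(t-j) \<le> N")
    case True
    have "cd N j t = t-j" using jt True by (simp add: cd_lt)
    moreover have "cd N (j+1) t = t-(j+1)" using jt True by (intro cd_lt) auto
    ultimately show ?thesis using s jt by auto
  next
    case False
    have a: "cd N j t = N-(t-j)" using jt False by (intro cd_lt2) auto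
    show ?thesis
    proof (cases "j=1")
      case True
      then have "pr N j = N" by (simp add: pr_def)
      moreover have "cd N N t = N - t" using False True assms by (intro cd_gt) auto
      ultimately show ?thesis using a True assms jt by auto
    next
      case j1: False
      then have "pr N j = j - 1" by (simp add: pr_def)
      moreover have "cd N (j-1) t = N - (t-(j-1))" using False jt j1 assms by (intro cd_lt2) auto
      ultimately show ?thesis using a j1 assms jt by auto
    qed
  qed
next
  case False
  then have jt: "t < j" using assms by auto
  then have p: "pr N j = j - 1" using assms by (simp add: pr_def)
  show ?thesis
  proof (cases "2*(j-t) \<le> N")
    case True
    have "cd N j t = j-t" using jt True by (simp add: cd_gt)
    moreover have "cd N (j-1) t = j-1-t" using jt True by (intro cd_gt) auto
    ultimately show ?thesis using p jt by auto
  next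
    case False
    have a: "cd N j t = N-(j-t)" using jt False by (intro cd_gt2) auto
    show ?thesis
    proof (cases "j=N")
      case True
      then have "sc N j = 1" by (simp add: sc_def)
      moreover have "cd N 1 t = t - 1" using False True assms by (intro cd_lt) auto
      ultimately show ?thesis using a True assms jt by auto
    next
      case jN: False
      then have "sc N j = j + 1" by (simp add: sc_def)
      moreover have "cd N (j+1) t = N - (j+1-t)" using False jt jN assms by (intro cd_gt2) auto
      ultimately show ?thesis using a jN assms jt by auto
    qed
  qed
qed

lemma cd_asc: assumes "1 \<le> j" "j \<le> 2*h" "1 \<le> t" "t \<le> 2*h" "1 \<le> h" "cd (2*h) j t < h"
  shows "cd (2*h) j t < cd (2*h) (sc (2*h) j) t \<or> cd (2*h) j t < cd (2*h) (pr (2*h) j) t"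
proof -
  let ?N = "2*h"
  consider "j = t" | "j < t" | "t < j" by linarith
  then show ?thesis
  proof cases
    case 1
    then have c0: "cd ?N j t = 0" by (simp add: cd_refl)
    show ?thesis
    proof (cases "j = ?N")
      case True
      then have "sc ?N j = 1" by (simp add: sc_def)
      moreover have "cd ?N 1 t = ?N - (t - 1)" using 1 True assms by (intro cd_lt2) auto
      ultimately show ?thesis using c0 1 True assms by auto
    next
      case False
      then have "sc ?N j = j+1" by (simp add: sc_def)
      moreover have "cd ?N (j+1) t = j + 1 - t" using 1 assms by (intro cd_gt) auto
      ultimately show ?thesis using c0 1 by auto
    qed
  next
    case 2
    show ?thesis
    proof (cases "2*(t-j) \<le> ?N")
      case True
      have a: "cd ?N j t = t-j" using 2 True by (simp add: cd_lt)
      show ?thesis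
      proof (cases "j = 1")
        case True
        then have "pr ?N j = ?N" by (simp add: pr_def)
        moreover have "cd ?N ?N t = t" using 2 True a assms by (subst cd_gt2) auto
        ultimately show ?thesis using a True 2 by auto
      next
        case False
        then have "pr ?N j = j - 1" by (simp add: pr_def)
        moreover have "cd ?N (j-1) t = t - (j - 1)" using 2 False a assms by (intro cd_lt) auto
        ultimately show ?thesis using a False 2 assms by auto
      qed
    next
      case False
      have a: "cd ?N j t = ?N-(t-j)" using 2 False by (intro cd_lt2) auto
      have "sc ?N j = j+1" using 2 assms by (simp add: sc_def)
      moreover have "cd ?N (j+1) t = ?N - (t - (j+1))" using 2 False a assms by (intro cd_lt2) auto
      ultimately show ?thesis using a 2 assms by auto
    qed
  next
    case 3
    then have p: "pr ?N j = j - 1" using assms by (simp add: pr_def)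
    show ?thesis
    proof (cases "2*(j-t) \<le> ?N")
      case True
      have a: "cd ?N j t = j-t" using 3 True by (simp add: cd_gt)
      show ?thesis
      proof (cases "j = ?N")
        case True
        then have "sc ?N j = 1" by (simp add: sc_def)
        moreover have "cd ?N 1 t = ?N - (t - 1)" using 3 True a assms by (intro cd_lt2) auto
        ultimately show ?thesis using a True 3 assms by auto
      next
        case False
        then have "sc ?N j = j + 1" by (simp add: sc_def)
        moreover have "cd ?N (j+1) t = j + 1 - t" using 3 False a assms by (intro cd_gt) auto
        ultimately show ?thesis using a False 3 assms by auto
      qed
    next
      case False
      have a: "cd ?N j t = ?N-(j-t)" using 3 False by (intro cd_gt2) auto
      have "cd ?N (j-1) t = ?N - (j - 1 - t)" using 3 False a assms by (intro cd_gt2) auto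
      then show ?thesis using a 3 assms p by auto
    qed
  qed
qed
lemma cd_max: assumes "1 \<le> j" "j \<le> 2*h" "1 \<le> t" "t \<le> 2*h" "1 \<le> h"
  shows "(cd (2*h) (sc (2*h) j) t \<le> cd (2*h) j t \<and> cd (2*h) (pr (2*h) j) t \<le> cd (2*h) j t) \<longleftrightarrow> cd (2*h) j t = h"
proof
  assume A: "cd (2*h) (sc (2*h) j) t \<le> cd (2*h) j t \<and> cd (2*h) (pr (2*h) j) t \<le> cd (2*h) j t"
  have "cd (2*h) j t \<le> h" using cd_le[of "2*h" j t] by simp
  moreover have "\<not> cd (2*h) j t < h" using cd_asc[OF assms] A by linarith
  ultimately show "cd (2*h) j t = h" by simp
next
  assume "cd (2*h) j t = h"
  then show "cd (2*h) (sc (2*h) j) t \<le> cd (2*h) j t \<and> cd (2*h) (pr (2*h) j) t \<le> cd (2*h) j t"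
    using cd_le[of "2*h" "sc (2*h) j" t] cd_le[of "2*h" "pr (2*h) j" t] by simp
qed

lemma cd_anti: "1 \<le> j \<Longrightarrow> j \<le> 2*h \<Longrightarrow> 1 \<le> h \<Longrightarrow> cd (2*h) j (h+1) = h \<longleftrightarrow> j = 1"
  unfolding cd_def by (auto simp: min_def split: if_splits)
lemma cd_anti2: "1 \<le> j \<Longrightarrow> j \<le> 2*h \<Longrightarrow> 1 \<le> h \<Longrightarrow> cd (2*h) j 1 = h \<longleftrightarrow> j = h+1"
  unfolding cd_def by (auto simp: min_def split: if_splits)
lemma cd_half: "cd (2*h) 1 (h+1) = h"
  unfolding cd_def by (auto simp: min_def split: if_splits)
lemma sc_eq: "1 \<le> j \<Longrightarrow> j \<le> N \<Longrightarrow> sc N j = j mod N + 1"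
  unfolding sc_def by (auto simp: le_eq_less_or_eq)
lemma sc_pr: "1 \<le> j \<Longrightarrow> j \<le> N \<Longrightarrow> sc N (pr N j) = j" unfolding sc_def pr_def by auto
lemma pr_range: "1 \<le> j \<Longrightarrow> j \<le> N \<Longrightarrow> 1 \<le> pr N j \<and> pr N j \<le> N" unfolding pr_def by auto
lemma sc_range: "1 \<le> j \<Longrightarrow> j \<le> N \<Longrightarrow> 1 \<le> sc N j \<and> sc N j \<le> N" unfolding sc_def by auto
lemma sc_inj: "1 \<le> r \<Longrightarrow> r \<le> N \<Longrightarrow> sc N r = j \<Longrightarrow> 1 \<le> j \<Longrightarrow> j \<le> N \<Longrightarrow> r = pr N j"
  unfolding sc_def pr_def by (auto split: if_splits)

lemma cd_desc_ex: "1 \<le> j \<Longrightarrow> j \<le> N \<Longrightarrow> 1 \<le> t \<Longrightarrow> t \<le> N \<Longrightarrow> j \<noteq> t \<Longrightarrow>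
   \<exists>j'. (j' = sc N j \<or> j' = pr N j) \<and> cd N j' t < cd N j t"
  using cd_desc by blast

lemma gdist_char:
  assumes inV: "\<And>x y. E x y \<Longrightarrow> x \<in> V \<and> y \<in> V"
  and lip: "\<And>x y z. E x y \<Longrightarrow> z \<in> V \<Longrightarrow> f x z \<le> f y z + 1"
  and zero: "\<And>x z. x \<in> V \<Longrightarrow> z \<in> V \<Longrightarrow> f x z = 0 \<Longrightarrow> x = z"
  and rfl: "\<And>z. z \<in> V \<Longrightarrow> f z z = 0"
  and desc: "\<And>x z. x \<in> V \<Longrightarrow> z \<in> V \<Longrightarrow> f x z \<noteq> 0 \<Longrightarrow> \<exists>y. E x y \<and> f y z < f x z"
  and xV: "x \<in> V" and zV: "z \<in> V"
  shows "gdist E x z = f x z"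
proof -
  have low: "(x,z) \<in> (edge_rel E)^^k \<Longrightarrow> f x z \<le> k" for k x
  proof (induction k arbitrary: x)
    case 0 then have "x = z" by simp
    then show ?case using rfl[OF zV] by simp
  next
    case (Suc k)
    then obtain y where y: "(x,y) \<in> edge_rel E" "(y,z) \<in> (edge_rel E)^^k" using relpow_Suc_D2 by metis
    then have "E x y" by (simp add: edge_rel_def)
    moreover have "f y z \<le> k" using Suc.IH y(2) by simp
    ultimately show ?case using lip[of x y z] zV by simp
  qed
  have up: "f x z = N \<Longrightarrow> x \<in> V \<Longrightarrow> (x,z) \<in> (edge_rel E)^^(f x z)" for N x
  proof (induction N arbitrary: x rule: less_induct)
    case (less N x)
    show ?case
    proof (cases "f x z = 0")
      case True
      then have "x = z" using zero[OF less.prems(2) zV] by simp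
      then show ?thesis using True by simp
    next
      case False
      then obtain y where y: "E x y" "f y z < f x z" using desc[OF less.prems(2) zV] by blast
      then have yV: "y \<in> V" using inV by blast
      have "f y z < N" using y(2) less.prems(1) by simp
      then have "(y,z) \<in> (edge_rel E)^^(f y z)" using less.IH[OF _ refl yV] by blast
      moreover have "f x z = Suc (f y z)" using lip[OF y(1) zV] y(2) by simp
      moreover have "(x,y) \<in> edge_rel E" using y(1) by (simp add: edge_rel_def)
      ultimately show ?thesis using relpow_Suc_I2[of x y "edge_rel E"] by simp
    qed
  qed
  have w: "(x,z) \<in> (edge_rel E)^^(f x z)" using up[OF refl xV] .
  have "gdist E x z \<le> f x z" unfolding gdist_def using w by (rule Least_le)
  moreover have "(x,z) \<in> (edge_rel E)^^(gdist E x z)" unfolding gdist_def using w by (rule LeastI)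
  then have "f x z \<le> gdist E x z" using low by blast
  ultimately show ?thesis by simp
qed



definition H :: "(nat \<Rightarrow> nat) \<Rightarrow> nat \<Rightarrow> nat" where "H n p = n p div 2"
definition S :: "(nat \<Rightarrow> nat) \<Rightarrow> nat \<Rightarrow> nat \<Rightarrow> nat" where "S n a b = (\<Sum>p\<in>{a..<b}. H n p)"
definition D :: "(nat \<Rightarrow> nat) \<Rightarrow> nat \<Rightarrow> nat \<Rightarrow> nat \<Rightarrow> nat \<Rightarrow> nat" where
  "D n p j k l = (if p = k then cd (n p) j l
     else if p < k then cd (n p) j (H n p + 1) + S n (p+1) k + cd (n k) 1 l
     else cd (n k) l (H n k + 1) + S n (k+1) p + cd (n p) 1 j)"
definition Vc :: "(nat \<Rightarrow> nat) \<Rightarrow> nat \<Rightarrow> (nat \<times> nat) set" where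
  "Vc n m = {(p,j). 1 \<le> p \<and> p \<le> m \<and> 1 \<le> j \<and> j \<le> n p \<and> \<not>(2 \<le> p \<and> j = 1)}"
definition F :: "(nat \<Rightarrow> nat) \<Rightarrow> nat \<times> nat \<Rightarrow> nat \<times> nat \<Rightarrow> nat" where
  "F n x y = D n (fst x) (snd x) (fst y) (snd y)"

lemma S_empty: "S n a a = 0" by (simp add: S_def)
lemma S_cons: "a < b \<Longrightarrow> S n a b = H n a + S n (Suc a) b" by (simp add: S_def sum.atLeast_Suc_lessThan)
lemma S_snoc: "a \<le> b \<Longrightarrow> S n a (Suc b) = S n a b + H n b" by (simp add: S_def sum.atLeastLessThan_Suc)
lemma S_split: "a \<le> b \<Longrightarrow> b \<le> c \<Longrightarrow> S n a c = S n a b + S n b c"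
  by (simp add: S_def sum.atLeastLessThan_concat)
lemma S_mono: "a' \<le> a \<Longrightarrow> b \<le> b' \<Longrightarrow> S n a b \<le> S n a' b'"
  unfolding S_def by (rule sum_mono2) auto

lemma D_sym: "D n p j k l = D n k l p j" unfolding D_def by (auto simp: cd_sym)
lemma F_sym: "F n x y = F n y x" unfolding F_def by (rule D_sym)
lemma F_refl: "F n z z = 0" by (simp add: F_def D_def cd_refl)

locale ecc = fixes n :: "nat \<Rightarrow> nat" and m :: nat
  assumes m2: "2 \<le> m" and ev: "\<forall>p\<in>{1..m}. even (n p) \<and> 4 \<le> n p"
begin

lemma nH: assumes "1 \<le> p" "p \<le> m" shows "n p = 2 * H n p \<and> 2 \<le> H n p"
proof -
  have "even (n p)" "4 \<le> n p" using ev assms by auto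
  then obtain c where "n p = 2*c" by (auto elim: evenE)
  then show ?thesis using \<open>4 \<le> n p\<close> by (simp add: H_def)
qed

lemma vx_in: assumes "1 \<le> p" "p \<le> m" "1 \<le> j" "j \<le> n p" shows "ecc_vx n p j \<in> Vc n m"
proof (cases "2 \<le> p \<and> j = 1")
  case True
  then have "n (p-1) = 2 * H n (p-1) \<and> 2 \<le> H n (p-1)" using nH[of "p-1"] assms by auto
  then show ?thesis using True assms by (auto simp: ecc_vx_def Vc_def H_def)
next
  case False
  then show ?thesis using assms by (auto simp: ecc_vx_def Vc_def)
qed

lemma vx_canon: "(p,j) \<in> Vc n m \<Longrightarrow> ecc_vx n p j = (p,j)" by (auto simp: Vc_def ecc_vx_def)

lemma V_eq: "ecc_V n m = Vc n m"
proof
  show "ecc_V n m \<subseteq> Vc n m" using vx_in by (auto simp: ecc_V_def)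
next
  show "Vc n m \<subseteq> ecc_V n m"
  proof
    fix x assume x: "x \<in> Vc n m"
    obtain p j where pj: "x = (p,j)" by fastforce
    then have e: "x = ecc_vx n p j" using vx_canon x by simp
    have "1 \<le> p \<and> p \<le> m \<and> 1 \<le> j \<and> j \<le> n p" using x pj by (auto simp: Vc_def)
    then show "x \<in> ecc_V n m" using e unfolding ecc_V_def by blast
  qed
qed

lemma W1: assumes "1 \<le> q" "Suc q \<le> m" "1 \<le> k" "k \<le> m"
  shows "D n q (H n q + 1) k l = D n (Suc q) 1 k l"
proof -
  have hq: "n q = 2*H n q" using nH assms by auto
  have hp: "n (Suc q) = 2 * H n (Suc q)" using nH assms by auto
  have c1: "cd (n (Suc q)) 1 (H n (Suc q) + 1) = H n (Suc q)" using hp cd_half by metis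
  have c2: "cd (n q) 1 (H n q + 1) = H n q" using hq cd_half by metis
  consider "k = Suc q" | "Suc q < k" | "k = q" | "k < q" by linarith
  then show ?thesis
  proof cases
    case 1 then show ?thesis by (simp add: D_def cd_refl S_empty)
  next
    case 2 then show ?thesis using c1 by (simp add: D_def cd_refl S_cons)
  next
    case 3 then show ?thesis by (simp add: D_def cd_refl S_empty cd_sym)
  next
    case 4 then show ?thesis using c2 by (simp add: D_def cd_refl S_snoc)
  qed
qed

lemma rep1: assumes "1 \<le> p" "p \<le> m" "1 \<le> j" "j \<le> n p" "1 \<le> k" "k \<le> m"
  shows "D n (fst (ecc_vx n p j)) (snd (ecc_vx n p j)) k l = D n p j k l"
proof (cases "2 \<le> p \<and> j = 1")
  case True
  then have "ecc_vx n p j = (p - 1, H n (p-1) + 1)" by (simp add: ecc_vx_def H_def)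
  moreover have "D n (p-1) (H n (p-1) + 1) k l = D n (Suc (p-1)) 1 k l"
    by (rule W1) (use True assms in auto)
  moreover have "Suc (p-1) = p" using True by simp
  ultimately show ?thesis using True by simp
next
  case False
  then have "ecc_vx n p j = (p,j)" by (auto simp: ecc_vx_def)
  then show ?thesis by simp
qed

lemma rep: assumes "1 \<le> p" "p \<le> m" "1 \<le> j" "j \<le> n p" "1 \<le> k" "k \<le> m" "1 \<le> l" "l \<le> n k"
  shows "F n (ecc_vx n p j) (ecc_vx n k l) = D n p j k l"
proof -
  have y: "ecc_vx n k l \<in> Vc n m" using vx_in assms by simp
  then have k': "1 \<le> fst (ecc_vx n k l)" "fst (ecc_vx n k l) \<le> m" by (auto simp: Vc_def)
  have "F n (ecc_vx n p j) (ecc_vx n k l) = D n (fst (ecc_vx n p j)) (snd (ecc_vx n p j)) (fst (ecc_vx n k l)) (snd (ecc_vx n k l))"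
    unfolding F_def ..
  also have "\<dots> = D n p j (fst (ecc_vx n k l)) (snd (ecc_vx n k l))"
    by (rule rep1) (use assms k' in auto)
  also have "\<dots> = D n (fst (ecc_vx n k l)) (snd (ecc_vx n k l)) p j" by (rule D_sym)
  also have "\<dots> = D n k l p j" by (rule rep1) (use assms in auto)
  also have "\<dots> = D n p j k l" by (rule D_sym)
  finally show ?thesis .
qed

lemma adj_E: assumes "ecc_adj n m x y"
  shows "\<exists>p q. 1\<le>p \<and> p\<le>m \<and> 1\<le>q \<and> q \<le> n p \<and> ((x = ecc_vx n p q \<and> y = ecc_vx n p (sc (n p) q)) \<or> (y = ecc_vx n p q \<and> x = ecc_vx n p (sc (n p) q)))"
proof -
  obtain p q where pq: "1\<le>p" "p\<le>m" "1\<le>q" "q \<le> n p" "(x = ecc_vx n p q \<and> y = ecc_vx n p (q mod n p + 1)) \<or> (y = ecc_vx n p q \<and> x = ecc_vx n p (q mod n p + 1))"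
    using assms unfolding ecc_adj_def by blast
  have "q mod n p + 1 = sc (n p) q" using pq sc_eq by simp
  then show ?thesis using pq by metis
qed

lemma adj_I: assumes "1\<le>p" "p\<le>m" "1\<le>q" "q \<le> n p"
  shows "ecc_adj n m (ecc_vx n p q) (ecc_vx n p (sc (n p) q)) \<and> ecc_adj n m (ecc_vx n p (sc (n p) q)) (ecc_vx n p q)"
proof -
  have "sc (n p) q = q mod n p + 1" using assms sc_eq by simp
  then show ?thesis unfolding ecc_adj_def using assms by metis
qed

lemma adj_nb: assumes "1\<le>p" "p\<le>m" "1\<le>q" "q \<le> n p" "q' = sc (n p) q \<or> q' = pr (n p) q"
  shows "ecc_adj n m (ecc_vx n p q) (ecc_vx n p q') \<and> 1 \<le> q' \<and> q' \<le> n p"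
  using assms(5)
proof
  assume q': "q' = sc (n p) q"
  have "1 \<le> sc (n p) q \<and> sc (n p) q \<le> n p" by (rule sc_range) (use assms in auto)
  then show ?thesis unfolding q' using adj_I[OF assms(1-4)] by blast
next
  assume q': "q' = pr (n p) q"
  have r: "1 \<le> pr (n p) q" "pr (n p) q \<le> n p" using pr_range[of q "n p"] assms by auto
  have e: "sc (n p) (pr (n p) q) = q" by (rule sc_pr) (use assms in auto)
  have "ecc_adj n m (ecc_vx n p (sc (n p) (pr (n p) q))) (ecc_vx n p (pr (n p) q))"
    using adj_I[OF assms(1,2) r] by blast
  then show ?thesis unfolding q' e using r by blast
qed

lemma adj_V: assumes "ecc_adj n m x y" shows "x \<in> Vc n m \<and> y \<in> Vc n m"
proof -
  obtain p q where pq: "1\<le>p" "p\<le>m" "1\<le>q" "q \<le> n p" "(x = ecc_vx n p q \<and> y = ecc_vx n p (sc (n p) q)) \<or> (y = ecc_vx n p q \<and> x = ecc_vx n p (sc (n p) q))"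
    using adj_E[OF assms] by blast
  have s: "1 \<le> sc (n p) q" "sc (n p) q \<le> n p" using sc_range pq by auto
  have "ecc_vx n p q \<in> Vc n m" "ecc_vx n p (sc (n p) q) \<in> Vc n m"
    using vx_in[OF pq(1-4)] vx_in[OF pq(1,2) s] by auto
  then show ?thesis using pq(5) by auto
qed

lemma Dlip: assumes "1\<le>p" "p\<le>m" "1\<le>q" "q \<le> n p" "1 \<le> k" "k \<le> m" "1 \<le> l" "l \<le> n k"
  shows "D n p (sc (n p) q) k l \<le> D n p q k l + 1 \<and> D n p q k l \<le> D n p (sc (n p) q) k l + 1"
proof -
  have np: "n p = 2 * H n p \<and> 2 \<le> H n p" using nH assms by auto
  have a: "cd (n p) (sc (n p) q) l \<le> cd (n p) q l + 1 \<and> cd (n p) q l \<le> cd (n p) (sc (n p) q) l + 1"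
    if "l \<le> n p" using cd_lip assms that by simp
  have b: "cd (n p) (sc (n p) q) (H n p + 1) \<le> cd (n p) q (H n p + 1) + 1 \<and> cd (n p) q (H n p + 1) \<le> cd (n p) (sc (n p) q) (H n p + 1) + 1"
    using cd_lip[of q "n p" "H n p + 1"] assms np by simp
  have c: "cd (n p) 1 (sc (n p) q) \<le> cd (n p) 1 q + 1 \<and> cd (n p) 1 q \<le> cd (n p) 1 (sc (n p) q) + 1"
    using cd_lip[of q "n p" 1] assms np cd_sym[of "n p" 1 q] cd_sym[of "n p" 1 "sc (n p) q"] by simp
  show ?thesis using a b c assms by (auto simp: D_def)
qed

lemma F_lip: assumes "ecc_adj n m x y" "z \<in> Vc n m" shows "F n x z \<le> F n y z + 1"
proof -
  obtain k l where z: "z = (k,l)" by fastforce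
  then have kl: "1 \<le> k" "k \<le> m" "1 \<le> l" "l \<le> n k" using assms(2) by (auto simp: Vc_def)
  have zz: "z = ecc_vx n k l" using vx_canon assms(2) z by simp
  obtain p q where pq: "1\<le>p" "p\<le>m" "1\<le>q" "q \<le> n p" "(x = ecc_vx n p q \<and> y = ecc_vx n p (sc (n p) q)) \<or> (y = ecc_vx n p q \<and> x = ecc_vx n p (sc (n p) q))"
    using adj_E[OF assms(1)] by blast
  have s: "1 \<le> sc (n p) q" "sc (n p) q \<le> n p" using sc_range pq by auto
  show ?thesis using pq(5) Dlip[OF pq(1-4) kl] rep[OF pq(1-4) kl] rep[OF pq(1,2) s kl] zz by auto
qed

lemma F_zero: assumes "x \<in> Vc n m" "z \<in> Vc n m" "F n x z = 0" shows "x = z"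
proof -
  obtain p j k l where x: "x = (p,j)" and z: "z = (k,l)" by fastforce
  have v: "1 \<le> p" "p \<le> m" "1 \<le> j" "j \<le> n p" "\<not>(2 \<le> p \<and> j = 1)"
      "1 \<le> k" "k \<le> m" "1 \<le> l" "l \<le> n k" "\<not>(2 \<le> k \<and> l = 1)"
    using assms x z by (auto simp: Vc_def)
  have D0: "D n p j k l = 0" using assms(3) x z by (simp add: F_def)
  consider "p = k" | "p < k" | "k < p" by linarith
  then show ?thesis
  proof cases
    case 1 then show ?thesis using D0 cd_zero[of j "n p" l] v x z by (simp add: D_def)
  next
    case 2 then have "cd (n k) 1 l = 0" using D0 by (simp add: D_def)
    then have "l = 1" using cd_zero[of 1 "n k" l] v by simp
    then show ?thesis using v 2 by simp
  next
    case 3 then have "cd (n p) 1 j = 0" using D0 by (simp add: D_def)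
    then have "j = 1" using cd_zero[of 1 "n p" j] v by simp
    then show ?thesis using v 3 by simp
  qed
qed


lemma Ddesc: assumes v: "1\<le>p" "p\<le>m" "1\<le>j" "j\<le>n p" "1\<le>k" "k\<le>m" "1\<le>l" "l\<le>n k"
  and nz: "D n p j k l \<noteq> 0"
  shows "\<exists>p' j' j''. 1\<le>p' \<and> p'\<le>m \<and> 1\<le>j' \<and> j'\<le>n p' \<and> ecc_vx n p' j' = ecc_vx n p j
     \<and> (j''=sc (n p') j' \<or> j''=pr (n p') j') \<and> D n p' j'' k l < D n p j k l"
proof -
  have np: "n p = 2*H n p" "2 \<le> H n p" using nH v by auto
  consider "p = k" | "p < k" | "k < p" by linarith
  then show ?thesis
  proof cases
    case 1
    have D1: "D n p j' k l = cd (n p) j' l" for j' using 1 by (simp add: D_def)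
    then have "j \<noteq> l" using nz by (auto simp: cd_refl)
    then obtain j'' where j'': "(j''=sc (n p) j \<or> j''=pr (n p) j)" "cd (n p) j'' l < cd (n p) j l"
      using cd_desc_ex[of j "n p" l] v 1 by auto
    have "1\<le>p \<and> p\<le>m \<and> 1\<le>j \<and> j\<le>n p \<and> ecc_vx n p j = ecc_vx n p j
     \<and> (j''=sc (n p) j \<or> j''=pr (n p) j) \<and> D n p j'' k l < D n p j k l"
      using v j'' unfolding D1 by simp
    then show ?thesis by blast
  next
    case 2
    have D2: "D n p j' k l = cd (n p) j' (H n p + 1) + S n (p+1) k + cd (n k) 1 l" for j'
      using 2 by (simp add: D_def)
    show ?thesis
    proof (cases "j = H n p + 1")
      case False
      obtain j'' where j'': "(j''=sc (n p) j \<or> j''=pr (n p) j)" "cd (n p) j'' (H n p + 1) < cd (n p) j (H n p + 1)"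
        using cd_desc_ex[of j "n p" "H n p + 1"] v np False by auto
      have "1\<le>p \<and> p\<le>m \<and> 1\<le>j \<and> j\<le>n p \<and> ecc_vx n p j = ecc_vx n p j
       \<and> (j''=sc (n p) j \<or> j''=pr (n p) j) \<and> D n p j'' k l < D n p j k l"
        using v j'' unfolding D2 by simp
      then show ?thesis by blast
    next
      case True
      define q where "q = Suc p"
      have q: "q \<le> k" "1 \<le> q" "q \<le> m" using 2 v unfolding q_def by auto
      have nq: "n q = 2 * H n q" "2 \<le> H n q" using nH[of q] q by auto
      have "ecc_vx n q 1 = (p, n p div 2 + 1)" unfolding q_def ecc_vx_def using v by simp
      moreover have "ecc_vx n p j = (p, j)" unfolding ecc_vx_def using True np by simp
      ultimately have eq: "ecc_vx n q 1 = ecc_vx n p j" using True by (simp add: H_def)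
      have DW: "D n p j k l = D n q 1 k l" using W1[of p k l] True v q unfolding q_def by simp
      show ?thesis
      proof (cases "q = k")
        case True
        have Dq: "D n q j' k l = cd (n k) j' l" for j' using True by (simp add: D_def)
        then have "1 \<noteq> l" using nz DW by (auto simp: cd_refl)
        obtain j'' where j'': "(j''=sc (n q) 1 \<or> j''=pr (n q) 1)" "cd (n k) j'' l < cd (n k) 1 l"
          using cd_desc_ex[of 1 "n k" l] \<open>1\<noteq>l\<close> v True by auto
        have "1\<le>q \<and> q\<le>m \<and> 1\<le>(1::nat) \<and> 1\<le>n q \<and> ecc_vx n q 1 = ecc_vx n p j
          \<and> (j''=sc (n q) 1 \<or> j''=pr (n q) 1) \<and> D n q j'' k l < D n p j k l"
          using q nq eq j'' DW unfolding Dq by simp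
        then show ?thesis by blast
      next
        case False
        then have qk: "q < k" using q by simp
        have Dq: "D n q j' k l = cd (n q) j' (H n q + 1) + S n (q+1) k + cd (n k) 1 l" for j'
          using qk by (simp add: D_def)
        obtain j'' where j'': "(j''=sc (n q) 1 \<or> j''=pr (n q) 1)" "cd (n q) j'' (H n q + 1) < cd (n q) 1 (H n q + 1)"
          using cd_desc_ex[of 1 "n q" "H n q + 1"] nq by auto
        have "1\<le>q \<and> q\<le>m \<and> 1\<le>(1::nat) \<and> 1\<le>n q \<and> ecc_vx n q 1 = ecc_vx n p j
          \<and> (j''=sc (n q) 1 \<or> j''=pr (n q) 1) \<and> D n q j'' k l < D n p j k l"
          using q nq eq j'' DW unfolding Dq by simp
        then show ?thesis by blast
      qed
    qed
  next
    case 3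
    have D3: "D n p j' k l = cd (n k) l (H n k + 1) + S n (k+1) p + cd (n p) 1 j'" for j'
      using 3 by (simp add: D_def)
    show ?thesis
    proof (cases "j = 1")
      case False
      obtain j'' where j'': "(j''=sc (n p) j \<or> j''=pr (n p) j)" "cd (n p) j'' 1 < cd (n p) j 1"
        using cd_desc_ex[of j "n p" 1] v False by auto
      then have j2: "cd (n p) 1 j'' < cd (n p) 1 j" using cd_sym[of "n p" 1 j''] cd_sym[of "n p" 1 j] by simp
      have "1\<le>p \<and> p\<le>m \<and> 1\<le>j \<and> j\<le>n p \<and> ecc_vx n p j = ecc_vx n p j
       \<and> (j''=sc (n p) j \<or> j''=pr (n p) j) \<and> D n p j'' k l < D n p j k l"
        using v j'' j2 unfolding D3 by simp
      then show ?thesis by blast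
    next
      case True
      define q where "q = p - 1"
      have pq: "p = Suc q" "1 \<le> q" "q \<le> m" using 3 v unfolding q_def by auto
      have nq: "n q = 2*H n q" "2 \<le> H n q" using nH[of q] pq v by auto
      have "ecc_vx n p j = (q, n q div 2 + 1)" unfolding ecc_vx_def using True pq by simp
      moreover have "ecc_vx n q (H n q + 1) = (q, H n q + 1)" unfolding ecc_vx_def using nq by simp
      ultimately have eq: "ecc_vx n q (H n q + 1) = ecc_vx n p j" by (simp add: H_def)
      have DW: "D n q (H n q + 1) k l = D n p j k l" using W1[of q k l] pq True v by simp
      have r: "1 \<le> H n q + 1" "H n q + 1 \<le> n q" using nq by auto
      show ?thesis
      proof (cases "q = k")
        case True
        have Dq: "D n q j' k l = cd (n q) j' l" for j' using True by (simp add: D_def)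
        then have "H n q + 1 \<noteq> l" using nz DW by (auto simp: cd_refl)
        obtain j'' where j'': "(j''=sc (n q) (H n q + 1) \<or> j''=pr (n q) (H n q + 1))" "cd (n q) j'' l < cd (n q) (H n q + 1) l"
          using cd_desc_ex[of "H n q + 1" "n q" l] \<open>H n q + 1 \<noteq> l\<close> v r True by auto
        have "1\<le>q \<and> q\<le>m \<and> 1\<le>H n q + 1 \<and> H n q + 1\<le>n q \<and> ecc_vx n q (H n q + 1) = ecc_vx n p j
          \<and> (j''=sc (n q) (H n q + 1) \<or> j''=pr (n q) (H n q + 1)) \<and> D n q j'' k l < D n p j k l"
          using pq r eq j'' DW[symmetric] unfolding Dq by simp
        then show ?thesis by blast
      next
        case False
        then have qk: "k < q" using 3 pq by simp
        have Dq: "D n q j' k l = cd (n k) l (H n k + 1) + S n (k+1) q + cd (n q) 1 j'" for j'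
          using qk by (simp add: D_def)
        obtain j'' where j'': "(j''=sc (n q) (H n q + 1) \<or> j''=pr (n q) (H n q + 1))" "cd (n q) j'' 1 < cd (n q) (H n q + 1) 1"
          using cd_desc_ex[of "H n q + 1" "n q" 1] r nq by auto
        then have j2: "cd (n q) 1 j'' < cd (n q) 1 (H n q + 1)"
          using cd_sym[of "n q" 1 j''] cd_sym[of "n q" 1 "H n q + 1"] by simp
        have "1\<le>q \<and> q\<le>m \<and> 1\<le>H n q + 1 \<and> H n q + 1\<le>n q \<and> ecc_vx n q (H n q + 1) = ecc_vx n p j
          \<and> (j''=sc (n q) (H n q + 1) \<or> j''=pr (n q) (H n q + 1)) \<and> D n q j'' k l < D n p j k l"
          using pq r eq j'' j2 DW[symmetric] unfolding Dq by simp
        then show ?thesis by blast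
      qed
    qed
  qed
qed

lemma F_desc: assumes "x \<in> Vc n m" "z \<in> Vc n m" "F n x z \<noteq> 0"
  shows "\<exists>y. ecc_adj n m x y \<and> F n y z < F n x z"
proof -
  obtain p j k l where x: "x = (p,j)" and z: "z = (k,l)" by fastforce
  have v: "1 \<le> p" "p \<le> m" "1 \<le> j" "j \<le> n p" "1 \<le> k" "k \<le> m" "1 \<le> l" "l \<le> n k"
    using assms x z by (auto simp: Vc_def)
  have xe: "x = ecc_vx n p j" using vx_canon assms(1) x by simp
  have ze: "z = ecc_vx n k l" using vx_canon assms(2) z by simp
  have Fx: "F n x z = D n p j k l" using x z by (simp add: F_def)
  obtain p' j' j'' where w: "1\<le>p'" "p'\<le>m" "1\<le>j'" "j'\<le>n p'" "ecc_vx n p' j' = ecc_vx n p j"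
     "j''=sc (n p') j' \<or> j''=pr (n p') j'" "D n p' j'' k l < D n p j k l"
    using Ddesc[OF v] assms(3) Fx by metis
  have a: "ecc_adj n m (ecc_vx n p' j') (ecc_vx n p' j'') \<and> 1 \<le> j'' \<and> j'' \<le> n p'"
    by (rule adj_nb) (use w in auto)
  have "F n (ecc_vx n p' j'') z = D n p' j'' k l" unfolding ze by (rule rep) (use w a v in auto)
  then show ?thesis using a w(5,7) xe Fx by (intro exI[of _ "ecc_vx n p' j''"]) simp
qed

lemma gdist_F: assumes "x \<in> Vc n m" "z \<in> Vc n m" shows "gdist (ecc_adj n m) x z = F n x z"
  by (rule gdist_char[where V="Vc n m"]) (use adj_V F_lip F_zero F_refl F_desc assms in auto)


lemma nbrs: assumes x: "(i,j) \<in> Vc n m" "(i,j) \<notin> ecc_V1 n m" and a: "ecc_adj n m (i,j) w"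
  shows "w = ecc_vx n i (sc (n i) j) \<or> w = ecc_vx n i (pr (n i) j)"
proof -
  obtain p q where pq: "1\<le>p" "p\<le>m" "1\<le>q" "q \<le> n p" "((i,j) = ecc_vx n p q \<and> w = ecc_vx n p (sc (n p) q)) \<or> (w = ecc_vx n p q \<and> (i,j) = ecc_vx n p (sc (n p) q))"
    using adj_E[OF a] by blast
  have V1: "ecc_vx n p 1 \<in> ecc_V1 n m" if "2 \<le> p" unfolding ecc_V1_def using pq that by blast
  have vij: "1 \<le> j" "j \<le> n i" using x by (auto simp: Vc_def)
  from pq(5) show ?thesis
  proof
    assume A: "(i,j) = ecc_vx n p q \<and> w = ecc_vx n p (sc (n p) q)"
    have "\<not> (2 \<le> p \<and> q = 1)" using V1 A x(2) by auto
    then have "ecc_vx n p q = (p,q)" by (auto simp: ecc_vx_def)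
    then have "p = i" "q = j" using A by auto
    then show ?thesis using A by simp
  next
    assume A: "w = ecc_vx n p q \<and> (i,j) = ecc_vx n p (sc (n p) q)"
    have "\<not> (2 \<le> p \<and> sc (n p) q = 1)" using V1 A x(2) by auto
    then have "ecc_vx n p (sc (n p) q) = (p, sc (n p) q)" by (auto simp: ecc_vx_def)
    then have pi: "p = i" and "sc (n p) q = j" using A by auto
    then have "q = pr (n i) j" using sc_inj[of q "n p" j] pq vij by simp
    then show ?thesis using A pi by simp
  qed
qed

lemma maxd: assumes x: "(i,j) \<in> Vc n m" "(i,j) \<notin> ecc_V1 n m" and y: "(k,l) \<in> Vc n m"
  shows "max_distant (ecc_adj n m) (i,j) (k,l) \<longleftrightarrow>
     D n i (sc (n i) j) k l \<le> D n i j k l \<and> D n i (pr (n i) j) k l \<le> D n i j k l"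
proof -
  have vi: "1 \<le> i" "i \<le> m" "1 \<le> j" "j \<le> n i" using x by (auto simp: Vc_def)
  have vk: "1 \<le> k" "k \<le> m" "1 \<le> l" "l \<le> n k" using y by (auto simp: Vc_def)
  have G: "gdist (ecc_adj n m) (k,l) (ecc_vx n i j') = D n i j' k l" if "1 \<le> j'" "j' \<le> n i" for j'
  proof -
    have "ecc_vx n i j' \<in> Vc n m" using vx_in vi that by simp
    then have "gdist (ecc_adj n m) (k,l) (ecc_vx n i j') = F n (k,l) (ecc_vx n i j')" using gdist_F y by simp
    also have "\<dots> = F n (ecc_vx n i j') (ecc_vx n k l)" using F_sym vx_canon y by simp
    also have "\<dots> = D n i j' k l" using rep vi vk that by simp
    finally show ?thesis .
  qed
  have G0: "gdist (ecc_adj n m) (i,j) (k,l) = D n i j k l" using gdist_F x y by (simp add: F_def)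
  have xe: "ecc_vx n i j = (i,j)" using vx_canon x by simp
  have a1: "ecc_adj n m (i,j) (ecc_vx n i (sc (n i) j)) \<and> 1 \<le> sc (n i) j \<and> sc (n i) j \<le> n i"
    using adj_nb[OF vi, of "sc (n i) j"] xe by simp
  have a2: "ecc_adj n m (i,j) (ecc_vx n i (pr (n i) j)) \<and> 1 \<le> pr (n i) j \<and> pr (n i) j \<le> n i"
    using adj_nb[OF vi, of "pr (n i) j"] xe by simp
  have g1: "gdist (ecc_adj n m) (k,l) (ecc_vx n i (sc (n i) j)) = D n i (sc (n i) j) k l" using G a1 by simp
  have g2: "gdist (ecc_adj n m) (k,l) (ecc_vx n i (pr (n i) j)) = D n i (pr (n i) j) k l" using G a2 by simp
  show ?thesis
  proof
    assume "max_distant (ecc_adj n m) (i,j) (k,l)"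
    then show "D n i (sc (n i) j) k l \<le> D n i j k l \<and> D n i (pr (n i) j) k l \<le> D n i j k l"
      unfolding max_distant_def using a1 a2 g1 g2 G0 by metis
  next
    assume A: "D n i (sc (n i) j) k l \<le> D n i j k l \<and> D n i (pr (n i) j) k l \<le> D n i j k l"
    show "max_distant (ecc_adj n m) (i,j) (k,l)" unfolding max_distant_def
    proof (intro allI impI)
      fix w assume "ecc_adj n m (i,j) w"
      then have "w = ecc_vx n i (sc (n i) j) \<or> w = ecc_vx n i (pr (n i) j)" using nbrs x by blast
      then show "gdist (ecc_adj n m) (k,l) w \<le> gdist (ecc_adj n m) (i,j) (k,l)"
        using A g1 g2 G0 by auto
    qed
  qed
qed

lemma partA: assumes x: "(i,j) \<in> Vc n m" "(i,j) \<notin> ecc_V1 n m" and y: "(i,l) \<in> Vc n m" "(i,l) \<notin> ecc_V1 n m"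
  shows "mutually_max_distant (ecc_adj n m) (i,j) (i,l) \<longleftrightarrow> gdist (ecc_adj n m) (i,j) (i,l) = n i div 2"
proof -
  have vi: "1 \<le> i" "i \<le> m" "1 \<le> j" "j \<le> n i" "1 \<le> l" "l \<le> n i" using x y by (auto simp: Vc_def)
  have ni: "n i = 2 * H n i" "2 \<le> H n i" using nH vi by auto
  have e: "2 * H n i = n i" using ni by simp
  have Dii: "D n i a i b = cd (n i) a b" for a b by (simp add: D_def)
  have m1: "max_distant (ecc_adj n m) (i,j) (i,l) \<longleftrightarrow> cd (n i) j l = H n i"
    using maxd[OF x y(1)] cd_max[of j "H n i" l, unfolded e] vi ni unfolding Dii by simp
  have m2: "max_distant (ecc_adj n m) (i,l) (i,j) \<longleftrightarrow> cd (n i) j l = H n i"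
    using maxd[OF y x(1)] cd_max[of l "H n i" j, unfolded e] vi ni cd_sym[of "n i" l j] unfolding Dii by simp
  have g: "gdist (ecc_adj n m) (i,j) (i,l) = cd (n i) j l" using gdist_F x y by (simp add: F_def Dii)
  show ?thesis unfolding mutually_max_distant_def m1 m2 g by (simp add: H_def)
qed

lemma S_one: "S n p (Suc p) = H n p" using S_snoc[of p p n] by (simp add: S_empty)

lemma Dbound: assumes "1 \<le> p" "p \<le> m" "1 \<le> k" "k \<le> m"
  shows "D n p j k l \<le> S n 1 (m+1)"
proof -
  have np: "n p = 2 * H n p" using nH assms by auto
  have nk: "n k = 2 * H n k" using nH assms by auto
  have c1: "cd (n p) a b \<le> H n p" for a b using cd_le[of "n p" a b] np by simp
  have c2: "cd (n k) a b \<le> H n k" for a b using cd_le[of "n k" a b] nk by simp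
  consider "p = k" | "p < k" | "k < p" by linarith
  then show ?thesis
  proof cases
    case 1
    have "S n p (Suc p) \<le> S n 1 (m+1)" using assms by (intro S_mono) auto
    then show ?thesis using 1 c1[of j l] S_one[of p] by (simp add: D_def)
  next
    case 2
    have "S n p (k+1) = H n p + S n (p+1) k + H n k"
      using S_cons[of p "k+1" n] S_snoc[of "p+1" k n] 2 by simp
    moreover have "S n p (k+1) \<le> S n 1 (m+1)" using assms by (intro S_mono) auto
    ultimately show ?thesis using 2 c1[of j "H n p + 1"] c2[of 1 l] by (simp add: D_def)
  next
    case 3
    have "S n k (p+1) = H n k + S n (k+1) p + H n p"
      using S_cons[of k "p+1" n] S_snoc[of "k+1" p n] 3 by simp
    moreover have "S n k (p+1) \<le> S n 1 (m+1)" using assms by (intro S_mono) auto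
    ultimately show ?thesis using 3 c2[of l "H n k + 1"] c1[of 1 j] by (simp add: D_def)
  qed
qed

lemma diam: "gdiam (ecc_V n m) (ecc_adj n m) = S n 1 (m+1)"
proof -
  let ?A = "{gdist (ecc_adj n m) u v | u v. u \<in> Vc n m \<and> v \<in> Vc n m}"
  have bnd: "y \<le> S n 1 (m+1)" if yA: "y \<in> ?A" for y
  proof -
    obtain u v where uv: "y = gdist (ecc_adj n m) u v" "u \<in> Vc n m" "v \<in> Vc n m" using yA by blast
    then have "y = F n u v" using gdist_F by simp
    moreover have "1 \<le> fst u" "fst u \<le> m" "1 \<le> fst v" "fst v \<le> m" using uv by (auto simp: Vc_def)
    ultimately show ?thesis unfolding F_def using Dbound by simp
  qed
  have sub: "?A \<subseteq> {..S n 1 (m+1)}" using bnd by (simp only: subset_iff atMost_iff) blast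
  have fin: "finite ?A" using finite_subset[OF sub] by simp
  have n1: "n 1 = 2 * H n 1" "2 \<le> H n 1" using nH[of 1] m2 by auto
  have nm: "n m = 2 * H n m" "2 \<le> H n m" using nH[of m] m2 by auto
  have u: "(1,1) \<in> Vc n m" using n1 m2 by (simp add: Vc_def)
  have v: "(m, H n m + 1) \<in> Vc n m" using nm m2 by (simp add: Vc_def)
  have "gdist (ecc_adj n m) (1,1) (m, H n m + 1) = D n 1 1 m (H n m + 1)"
    using gdist_F[OF u v] by (simp add: F_def)
  also have "\<dots> = cd (n 1) 1 (H n 1 + 1) + S n 2 m + cd (n m) 1 (H n m + 1)"
    using m2 by (simp add: D_def numeral_2_eq_2)
  also have "\<dots> = H n 1 + S n 2 m + H n m" using n1 nm cd_half by metis
  also have "\<dots> = S n 1 (m+1)" using S_cons[of 1 "m+1" n] S_snoc[of 2 m n] m2 by (simp add: numeral_2_eq_2)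
  finally have g: "gdist (ecc_adj n m) (1,1) (m, H n m + 1) = S n 1 (m+1)" .
  have "S n 1 (m+1) \<in> ?A" unfolding g[symmetric] using u v by blast
  then show ?thesis unfolding gdiam_def V_eq using Max_eqI[OF fin bnd] by blast
qed


lemma partB: assumes x: "(i,j) \<in> Vc n m" "(i,j) \<notin> ecc_V1 n m" and y: "(k,l) \<in> Vc n m" "(k,l) \<notin> ecc_V1 n m"
  and ik: "i < k"
  shows "mutually_max_distant (ecc_adj n m) (i,j) (k,l) \<longleftrightarrow>
         gdist (ecc_adj n m) (i,j) (k,l) = gdiam (ecc_V n m) (ecc_adj n m)"
proof -
  have vi: "1 \<le> i" "i \<le> m" "1 \<le> j" "j \<le> n i" "\<not>(2 \<le> i \<and> j = 1)" using x by (auto simp: Vc_def)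
  have vk: "1 \<le> k" "k \<le> m" "1 \<le> l" "l \<le> n k" using y by (auto simp: Vc_def)
  have ni: "n i = 2 * H n i" "2 \<le> H n i" using nH vi by auto
  have nk: "n k = 2 * H n k" "2 \<le> H n k" using nH vk by auto
  have ei: "2 * H n i = n i" and ek: "2 * H n k = n k" using ni nk by simp_all
  have Dx: "D n i j' k l = cd (n i) j' (H n i + 1) + S n (i+1) k + cd (n k) 1 l" for j'
    using ik by (simp add: D_def)
  have Dy: "D n k l' i j = cd (n i) j (H n i + 1) + S n (i+1) k + cd (n k) 1 l'" for l'
    using ik by (simp add: D_def)
  have md1: "max_distant (ecc_adj n m) (i,j) (k,l) \<longleftrightarrow> j = 1"
  proof -
    have "max_distant (ecc_adj n m) (i,j) (k,l) \<longleftrightarrow> cd (n i) j (H n i + 1) = H n i"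
      using maxd[OF x y(1)] cd_max[of j "H n i" "H n i + 1", unfolded ei] vi ni unfolding Dx by simp
    also have "\<dots> \<longleftrightarrow> j = 1" using cd_anti[of j "H n i", unfolded ei] vi ni by simp
    finally show ?thesis .
  qed
  have md2: "max_distant (ecc_adj n m) (k,l) (i,j) \<longleftrightarrow> l = H n k + 1"
  proof -
    have s: "cd (n k) 1 l' = cd (n k) l' 1" for l' by (rule cd_sym)
    have "max_distant (ecc_adj n m) (k,l) (i,j) \<longleftrightarrow> cd (n k) l 1 = H n k"
      using maxd[OF y x(1)] cd_max[of l "H n k" 1, unfolded ek] vk nk unfolding Dy s by simp
    also have "\<dots> \<longleftrightarrow> l = H n k + 1" using cd_anti2[of l "H n k", unfolded ek] vk nk by simp
    finally show ?thesis .
  qed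
  have i1: "i = 1" if "j = 1" using vi that by simp
  have k1: "k = m" if "l = H n k + 1"
  proof (rule ccontr)
    assume "k \<noteq> m"
    then have "Suc k \<le> m" using vk by simp
    then have "ecc_vx n (Suc k) 1 \<in> ecc_V1 n m" unfolding ecc_V1_def using vk by (intro CollectI exI[of _ "Suc k"]) simp
    moreover have "ecc_vx n (Suc k) 1 = (k,l)" using that vk by (simp add: ecc_vx_def H_def)
    ultimately show False using y(2) by simp
  qed
  have gd: "gdist (ecc_adj n m) (i,j) (k,l) = cd (n i) j (H n i + 1) + S n (i+1) k + cd (n k) 1 l"
    using gdist_F[OF x(1) y(1)] Dx by (simp add: F_def)
  have dec: "S n 1 (m+1) = S n 1 i + H n i + S n (i+1) k + H n k + S n (k+1) (m+1)"
  proof -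
    have "S n 1 (m+1) = S n 1 i + S n i (m+1)" using vi by (intro S_split) auto
    moreover have "S n i (m+1) = H n i + S n (i+1) (m+1)" using S_cons[of i "m+1" n] vi by simp
    moreover have "S n (i+1) (m+1) = S n (i+1) (k+1) + S n (k+1) (m+1)" using ik vk by (intro S_split) auto
    moreover have "S n (i+1) (k+1) = S n (i+1) k + H n k" using S_snoc[of "i+1" k n] ik by simp
    ultimately show ?thesis by simp
  qed
  have Si: "S n 1 i = 0 \<Longrightarrow> i = 1"
  proof (rule ccontr)
    assume "S n 1 i = 0" "i \<noteq> 1"
    then have "S n 1 i = H n 1 + S n 2 i" using S_cons[of 1 i n] vi by (simp add: numeral_2_eq_2)
    moreover have "2 \<le> H n 1" using nH[of 1] m2 by auto
    ultimately show False using \<open>S n 1 i = 0\<close> by simp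
  qed
  have Sk: "S n (k+1) (m+1) = 0 \<Longrightarrow> k = m"
  proof (rule ccontr)
    assume "S n (k+1) (m+1) = 0" "k \<noteq> m"
    then have "S n (k+1) (m+1) = H n (k+1) + S n (k+2) (m+1)" using S_cons[of "k+1" "m+1" n] vk by simp
    moreover have "2 \<le> H n (k+1)" using nH[of "k+1"] vk \<open>k \<noteq> m\<close> by auto
    ultimately show False using \<open>S n (k+1) (m+1) = 0\<close> by simp
  qed
  have b1: "cd (n i) j (H n i + 1) \<le> H n i" using cd_le[of "n i" j "H n i + 1"] ni by simp
  have b2: "cd (n k) 1 l \<le> H n k" using cd_le[of "n k" 1 l] nk by simp
  have mut: "mutually_max_distant (ecc_adj n m) (i,j) (k,l) \<longleftrightarrow> j = 1 \<and> l = H n k + 1"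
    unfolding mutually_max_distant_def md1 md2 ..
  show ?thesis unfolding mut diam gd
  proof
    assume A: "j = 1 \<and> l = H n k + 1"
    then have "i = 1" "k = m" using i1 k1 by auto
    moreover have "cd (n i) j (H n i + 1) = H n i" using A cd_half[of "H n i"] ei by simp
    moreover have "cd (n k) 1 l = H n k" using A cd_half[of "H n k"] ek by simp
    ultimately show "cd (n i) j (H n i + 1) + S n (i + 1) k + cd (n k) 1 l = S n 1 (m + 1)"
      using dec by (simp add: S_empty)
  next
    assume A: "cd (n i) j (H n i + 1) + S n (i + 1) k + cd (n k) 1 l = S n 1 (m + 1)"
    then have c1: "cd (n i) j (H n i + 1) = H n i" and c2: "cd (n k) 1 l = H n k"
      using dec b1 b2 by linarith+
    have "j = 1" using c1 cd_anti[of j "H n i", unfolded ei] vi ni by simp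
    moreover have "l = H n k + 1" using c2 cd_sym[of "n k" 1 l] cd_anti2[of l "H n k", unfolded ek] vk nk by simp
    ultimately show "j = 1 \<and> l = H n k + 1" by simp
  qed
qed

end

theorem theorem3p3:
  fixes n :: "nat \<Rightarrow> nat" and m i j k l :: nat
  assumes "2 \<le> m"
    and "\<forall>p\<in>{1..m}. even (n p) \<and> 4 \<le> n p"
    and "1 \<le> i" "i \<le> m" "1 \<le> j" "j \<le> n i"
    and "1 \<le> k" "k \<le> m" "1 \<le> l" "l \<le> n k"
    and "ecc_vx n i j \<notin> ecc_V1 n m" and "ecc_vx n k l \<notin> ecc_V1 n m"
    and "ecc_vx n i j \<noteq> ecc_vx n k l"
  shows "(i = k \<longrightarrow>
            (mutually_max_distant (ecc_adj n m) (ecc_vx n i j) (ecc_vx n k l)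
             \<longleftrightarrow> gdist (ecc_adj n m) (ecc_vx n i j) (ecc_vx n k l) = n i div 2))
       \<and> (i \<noteq> k \<longrightarrow>
            (mutually_max_distant (ecc_adj n m) (ecc_vx n i j) (ecc_vx n k l)
             \<longleftrightarrow> gdist (ecc_adj n m) (ecc_vx n i j) (ecc_vx n k l)
                 = gdiam (ecc_V n m) (ecc_adj n m)))"
proof -
  interpret ecc n m using assms(1,2) by unfold_locales
  have xin: "ecc_vx n i j \<in> Vc n m" using vx_in assms by simp
  have yin: "ecc_vx n k l \<in> Vc n m" using vx_in assms by simp
  have "\<not> (2 \<le> i \<and> j = 1)"
  proof
    assume "2 \<le> i \<and> j = 1"
    then have "ecc_vx n i j \<in> ecc_V1 n m" unfolding ecc_V1_def using assms by blast
    then show False using assms by simp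
  qed
  then have xe: "ecc_vx n i j = (i,j)" by (auto simp: ecc_vx_def)
  have "\<not> (2 \<le> k \<and> l = 1)"
  proof
    assume "2 \<le> k \<and> l = 1"
    then have "ecc_vx n k l \<in> ecc_V1 n m" unfolding ecc_V1_def using assms by blast
    then show False using assms by simp
  qed
  then have ye: "ecc_vx n k l = (k,l)" by (auto simp: ecc_vx_def)
  have x: "(i,j) \<in> Vc n m" "(i,j) \<notin> ecc_V1 n m" using xin assms xe by auto
  have y: "(k,l) \<in> Vc n m" "(k,l) \<notin> ecc_V1 n m" using yin assms ye by auto
  have A: "i = k \<longrightarrow>
            (mutually_max_distant (ecc_adj n m) (i,j) (k,l)
             \<longleftrightarrow> gdist (ecc_adj n m) (i,j) (k,l) = n i div 2)"
  proof
    assume ik: "i = k"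
    show "mutually_max_distant (ecc_adj n m) (i,j) (k,l) \<longleftrightarrow> gdist (ecc_adj n m) (i,j) (k,l) = n i div 2"
      using partA[OF x] y unfolding ik by simp
  qed
  have B: "mutually_max_distant (ecc_adj n m) (i,j) (k,l)
             \<longleftrightarrow> gdist (ecc_adj n m) (i,j) (k,l) = gdiam (ecc_V n m) (ecc_adj n m)" if "i \<noteq> k"
  proof (cases "i < k")
    case True show ?thesis using partB[OF x y True] by simp
  next
    case False
    then have ki: "k < i" using that by simp
    have "mutually_max_distant (ecc_adj n m) (i,j) (k,l) = mutually_max_distant (ecc_adj n m) (k,l) (i,j)"
      unfolding mutually_max_distant_def by (rule conj_commute)
    moreover have "gdist (ecc_adj n m) (i,j) (k,l) = gdist (ecc_adj n m) (k,l) (i,j)"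
      unfolding gdist_F[OF x(1) y(1)] gdist_F[OF y(1) x(1)] by (rule F_sym)
    ultimately show ?thesis using partB[OF y x ki] by simp
  qed
  show ?thesis unfolding xe ye using A B by (intro conjI impI) auto
qed


end
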